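(* Let $M$ and $M'$ be two stable matchings in an instance $I$ of SPA-S, and let $M^\lor$ be the assignment defined from $M,M'$ in the context. Then $M^\lor$ is a stable matching.
   Context: An instance $I$ of SPA-S consists of a finite set $\mathcal{S}$ of students, a finite set $\mathcal{P}$ of projects and a finite set $\mathcal{L}$ of lecturers. Each student $s_i$ ranks a subset $A_i\subseteq\mathcal{P}$ (its acceptable projects) in strict order. Each project is offered by exactly one lecturer; lecturer $l_k$ offers a nonempty set $P_k\subseteq\mathcal{P}$, the $P_k$ partitioning $\mathcal{P}$. Each lecturer $l_k$ ranks in strict order the students who find at least one project of $P_k$ acceptable. Projects have capacities $c_j\in\mathbb{Z}^+$, lecturers have capacities $d_k\in\mathbb{Z}^+$ with $\max\{c_j:p_j\in P_k\}\le d_k\le\sum\{c_j:p_j\in P_k\}$. A pair $(s_i,p_j)$, $p_j$ offered by $l_k$, is acceptable if $p_j\in A_i$ and $s_i$ is on $l_k$'s list. A matching $M$ is a set of acceptable pairs with each student in at most one pair, $|M(p_j)|\le c_j$, $|M(l_k)|\le d_k$, where for an assignment $M$ (a set of acceptable pairs), $M(s_i)$, $M(p_j)$, $M(l_k)$ denote the project of $s_i$, the students assigned to $p_j$, and the students assigned to projects of $l_k$. Undersubscribed/full means fewer than/exactly capacity many assigned students. An acceptable pair $(s_i,p_j)\notin M$ ($p_j$ offered by $l_k$) blocks $M$ if ($s_i$ is unassigned or prefers $p_j$ to $M(s_i)$) and one of: (P1) $p_j$ and $l_k$ undersubscribed; (P2) $p_j$ undersubscribed, $l_k$ full, $s_i\in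 M(l_k)$; (P3) $p_j$ undersubscribed, $l_k$ full, $l_k$ prefers $s_i$ to the worst student of $M(l_k)$; (P4) $p_j$ full and $l_k$ prefers $s_i$ to the worst student of $M(p_j)$. $M$ is stable if it is a matching with no blocking pair. Given stable matchings $M,M'$, $M^\lor$ is the assignment in which each student unassigned in both $M$ and $M'$ is unassigned, each student assigned to the same project in both is assigned to that project, and every other student is assigned to the worse (in her preference) of her projects in $M$ and $M'$. *)

theory Defs
  imports Main
begin

text \<open>Students of type 's, projects of type 'p, lecturers of type 'l.
  spref s : strict preference list of student s over her acceptable projects (earlier = better);
  lec p : the lecturer offering p; lpref l : strict preference list of lecturer l;
  cp p, cl l : project and lecturer capacities.\<close>

definition prefers :: "'a list \<Rightarrow> 'a \<Rightarrow> 'a \<Rightarrow> bool" where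
  "prefers xs a b \<longleftrightarrow> (\<exists>i j. i < j \<and> j < length xs \<and> xs ! i = a \<and> xs ! j = b)"

definition worst :: "'a list \<Rightarrow> 'a set \<Rightarrow> 'a" where
  "worst xs X = (THE w. w \<in> X \<and> (\<forall>t\<in>X. t \<noteq> w \<longrightarrow> prefers xs t w))"

definition spa_instance ::
  "'s set \<Rightarrow> 'p set \<Rightarrow> 'l set \<Rightarrow> ('s \<Rightarrow> 'p list) \<Rightarrow> ('p \<Rightarrow> 'l) \<Rightarrow> ('l \<Rightarrow> 's list)
   \<Rightarrow> ('p \<Rightarrow> nat) \<Rightarrow> ('l \<Rightarrow> nat) \<Rightarrow> bool" where
  "spa_instance S P L spref lec lpref cp cl \<longleftrightarrow>
     finite S \<and> finite P \<and> finite L \<and>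
     (\<forall>s\<in>S. distinct (spref s) \<and> set (spref s) \<subseteq> P) \<and>
     (\<forall>p\<in>P. lec p \<in> L) \<and>
     (\<forall>l\<in>L. {p\<in>P. lec p = l} \<noteq> {}) \<and>
     (\<forall>l\<in>L. distinct (lpref l) \<and>
        set (lpref l) = {s\<in>S. \<exists>p\<in>set (spref s). lec p = l}) \<and>
     (\<forall>p\<in>P. 0 < cp p) \<and>
     (\<forall>l\<in>L. 0 < cl l \<and> (\<forall>p\<in>P. lec p = l \<longrightarrow> cp p \<le> cl l) \<and>
        cl l \<le> sum cp {p\<in>P. lec p = l})"

definition acceptable ::
  "'s set \<Rightarrow> ('s \<Rightarrow> 'p list) \<Rightarrow> ('p \<Rightarrow> 'l) \<Rightarrow> ('l \<Rightarrow> 's list) \<Rightarrow> 's \<Rightarrow> 'p \<Rightarrow> bool" where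
  "acceptable S spref lec lpref s p \<longleftrightarrow>
     s \<in> S \<and> p \<in> set (spref s) \<and> s \<in> set (lpref (lec p))"

definition assigned_p :: "('s \<times> 'p) set \<Rightarrow> 'p \<Rightarrow> 's set" where
  "assigned_p M p = {s. (s, p) \<in> M}"

definition assigned_l :: "('p \<Rightarrow> 'l) \<Rightarrow> ('s \<times> 'p) set \<Rightarrow> 'l \<Rightarrow> 's set" where
  "assigned_l lec M l = {s. \<exists>p. (s, p) \<in> M \<and> lec p = l}"

definition matching ::
  "'s set \<Rightarrow> 'p set \<Rightarrow> 'l set \<Rightarrow> ('s \<Rightarrow> 'p list) \<Rightarrow> ('p \<Rightarrow> 'l) \<Rightarrow> ('l \<Rightarrow> 's list)
   \<Rightarrow> ('p \<Rightarrow> nat) \<Rightarrow> ('l \<Rightarrow> nat) \<Rightarrow> ('s \<times> 'p) set \<Rightarrow> bool" where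
  "matching S P L spref lec lpref cp cl M \<longleftrightarrow>
     (\<forall>(s, p)\<in>M. acceptable S spref lec lpref s p) \<and>
     (\<forall>s p q. (s, p) \<in> M \<longrightarrow> (s, q) \<in> M \<longrightarrow> p = q) \<and>
     (\<forall>p\<in>P. card (assigned_p M p) \<le> cp p) \<and>
     (\<forall>l\<in>L. card (assigned_l lec M l) \<le> cl l)"

definition blocking_pair ::
  "'s set \<Rightarrow> ('s \<Rightarrow> 'p list) \<Rightarrow> ('p \<Rightarrow> 'l) \<Rightarrow> ('l \<Rightarrow> 's list)
   \<Rightarrow> ('p \<Rightarrow> nat) \<Rightarrow> ('l \<Rightarrow> nat) \<Rightarrow> ('s \<times> 'p) set \<Rightarrow> 's \<Rightarrow> 'p \<Rightarrow> bool" where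
  "blocking_pair S spref lec lpref cp cl M s p \<longleftrightarrow>
     (let l = lec p; Mp = assigned_p M p; Ml = assigned_l lec M l in
     acceptable S spref lec lpref s p \<and> (s, p) \<notin> M \<and>
     ((\<forall>q. (s, q) \<notin> M) \<or> (\<exists>q. (s, q) \<in> M \<and> prefers (spref s) p q)) \<and>
     ((card Mp < cp p \<and> card Ml < cl l) \<or>
      (card Mp < cp p \<and> card Ml = cl l \<and> s \<in> Ml) \<or>
      (card Mp < cp p \<and> card Ml = cl l \<and> prefers (lpref l) s (worst (lpref l) Ml)) \<or>
      (card Mp = cp p \<and> prefers (lpref l) s (worst (lpref l) Mp))))"

definition stable ::
  "'s set \<Rightarrow> 'p set \<Rightarrow> 'l set \<Rightarrow> ('s \<Rightarrow> 'p list) \<Rightarrow> ('p \<Rightarrow> 'l) \<Rightarrow> ('l \<Rightarrow> 's list)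
   \<Rightarrow> ('p \<Rightarrow> nat) \<Rightarrow> ('l \<Rightarrow> nat) \<Rightarrow> ('s \<times> 'p) set \<Rightarrow> bool" where
  "stable S P L spref lec lpref cp cl M \<longleftrightarrow>
     matching S P L spref lec lpref cp cl M \<and>
     \<not> (\<exists>s p. blocking_pair S spref lec lpref cp cl M s p)"

text \<open>The assignment M-join: same project if equal in both; otherwise the worse of the two
  projects (for the student); a student assigned in only one of M, M' is left unassigned
  (this case does not arise for stable matchings).\<close>
definition join_worse :: "('s \<Rightarrow> 'p list) \<Rightarrow> ('s \<times> 'p) set \<Rightarrow> ('s \<times> 'p) set \<Rightarrow> ('s \<times> 'p) set" where
  "join_worse spref M M' = {(s, p).
     ((s, p) \<in> M \<and> (s, p) \<in> M') \<or>
     ((s, p) \<in> M \<and> (\<exists>q. (s, q) \<in> M' \<and> prefers (spref s) q p)) \<or>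
     ((s, p) \<in> M' \<and> (\<exists>q. (s, q) \<in> M \<and> prefers (spref s) q p))}"

end

theory Submission
  imports Defs
begin

lemma prefers_set: "prefers xs a b \<Longrightarrow> a \<in> set xs \<and> b \<in> set xs"
  unfolding prefers_def by auto

lemma prefers_irrefl: "distinct xs \<Longrightarrow> \<not> prefers xs a a"
  unfolding prefers_def by (auto simp: nth_eq_iff_index_eq)

lemma prefers_asym: "distinct xs \<Longrightarrow> prefers xs a b \<Longrightarrow> \<not> prefers xs b a"
  unfolding prefers_def by (metis nth_eq_iff_index_eq order.strict_trans order.asym)

lemma prefers_trans: "distinct xs \<Longrightarrow> prefers xs a b \<Longrightarrow> prefers xs b c \<Longrightarrow> prefers xs a c"
  unfolding prefers_def by (metis nth_eq_iff_index_eq order.strict_trans)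

lemma prefers_total: "a \<in> set xs \<Longrightarrow> b \<in> set xs \<Longrightarrow> a \<noteq> b \<Longrightarrow> prefers xs a b \<or> prefers xs b a"
  unfolding prefers_def in_set_conv_nth by (metis linorder_neqE_nat)

lemma ex_worst:
  assumes "distinct xs" "finite X" "X \<noteq> {}" "X \<subseteq> set xs"
  shows "\<exists>w\<in>X. \<forall>t\<in>X. t \<noteq> w \<longrightarrow> prefers xs t w"
  using assms(2,3,4)
proof (induction X rule: finite_ne_induct)
  case (singleton x) then show ?case by auto
next
  case (insert x F)
  then obtain w where w: "w \<in> F" "\<forall>t\<in>F. t \<noteq> w \<longrightarrow> prefers xs t w" by auto
  have "x \<noteq> w" using insert w by auto
  then have "prefers xs x w \<or> prefers xs w x" using prefers_total insert w by (metis insert_subset subsetD)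
  then show ?case
  proof
    assume "prefers xs x w" then show ?thesis using w by auto
  next
    assume xw: "prefers xs w x"
    have "\<forall>t\<in>insert x F. t \<noteq> x \<longrightarrow> prefers xs t x"
      using w xw prefers_trans[OF assms(1)] by auto
    then show ?thesis by auto
  qed
qed

lemma worst_prop:
  assumes "distinct xs" "finite X" "X \<noteq> {}" "X \<subseteq> set xs"
  shows "worst xs X \<in> X \<and> (\<forall>t\<in>X. t \<noteq> worst xs X \<longrightarrow> prefers xs t (worst xs X))"
proof -
  obtain w where w: "w\<in>X" "\<forall>t\<in>X. t \<noteq> w \<longrightarrow> prefers xs t w" using ex_worst[OF assms] by blast
  have "worst xs X = w" unfolding worst_def
  proof (rule the_equality)
    show "w \<in> X \<and> (\<forall>t\<in>X. t \<noteq> w \<longrightarrow> prefers xs t w)" using w by auto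
  next
    fix v assume v: "v \<in> X \<and> (\<forall>t\<in>X. t \<noteq> v \<longrightarrow> prefers xs t v)"
    show "v = w"
    proof (rule ccontr)
      assume "v \<noteq> w"
      then have "prefers xs v w" "prefers xs w v" using v w by auto
      then show False using prefers_asym[OF assms(1)] by blast
    qed
  qed
  then show ?thesis using w by simp
qed

lemma prefers_worst_iff:
  assumes "distinct xs" "finite X" "X \<noteq> {}" "X \<subseteq> set xs"
  shows "prefers xs s (worst xs X) \<longleftrightarrow> (\<exists>t\<in>X. prefers xs s t)"
proof
  assume "prefers xs s (worst xs X)" then show "\<exists>t\<in>X. prefers xs s t" using worst_prop[OF assms] by blast
next
  assume "\<exists>t\<in>X. prefers xs s t"
  then obtain t where t: "t \<in> X" "prefers xs s t" by blast
  show "prefers xs s (worst xs X)"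
  proof (cases "t = worst xs X")
    case True then show ?thesis using t by simp
  next
    case False then show ?thesis using worst_prop[OF assms] t prefers_trans[OF assms(1)] by blast
  qed
qed


definition desires :: "('s \<Rightarrow> 'p list) \<Rightarrow> ('s \<times> 'p) set \<Rightarrow> 's \<Rightarrow> 'p \<Rightarrow> bool" where
  "desires spref N s p \<longleftrightarrow> (s, p) \<notin> N \<and> ((\<forall>q. (s, q) \<notin> N) \<or> (\<exists>q. (s, q) \<in> N \<and> prefers (spref s) p q))"

locale spa =
  fixes S :: "'s set" and P :: "'p set" and L :: "'l set"
    and spref :: "'s \<Rightarrow> 'p list" and lec :: "'p \<Rightarrow> 'l" and lpref :: "'l \<Rightarrow> 's list"
    and cp :: "'p \<Rightarrow> nat" and cl :: "'l \<Rightarrow> nat"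
  assumes inst: "spa_instance S P L spref lec lpref cp cl"
begin

lemma finS: "finite S" and finP: "finite P" and finL: "finite L"
  using inst unfolding spa_instance_def by auto

lemma lec_in: "p \<in> P \<Longrightarrow> lec p \<in> L"
  using inst unfolding spa_instance_def by auto

lemma dist_s: "s \<in> S \<Longrightarrow> distinct (spref s)"
  using inst unfolding spa_instance_def by auto

lemma spref_P: "s \<in> S \<Longrightarrow> set (spref s) \<subseteq> P"
  using inst unfolding spa_instance_def by auto

lemma dist_l: "l \<in> L \<Longrightarrow> distinct (lpref l)"
  using inst unfolding spa_instance_def by auto

lemma cp_pos: "p \<in> P \<Longrightarrow> 0 < cp p"
  using inst unfolding spa_instance_def by auto

lemma cl_pos: "l \<in> L \<Longrightarrow> 0 < cl l"
  using inst unfolding spa_instance_def by auto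

abbreviation "matching' N \<equiv> matching S P L spref lec lpref cp cl N"
abbreviation "stable' N \<equiv> stable S P L spref lec lpref cp cl N"

lemma mpair:
  assumes "matching' N" "(s, p) \<in> N"
  shows "s \<in> S \<and> p \<in> P \<and> p \<in> set (spref s) \<and> s \<in> set (lpref (lec p)) \<and> lec p \<in> L"
proof -
  have "acceptable S spref lec lpref s p" using assms unfolding matching_def by auto
  then show ?thesis unfolding acceptable_def using spref_P lec_in by auto
qed

lemma mfun: "matching' N \<Longrightarrow> (s, p) \<in> N \<Longrightarrow> (s, q) \<in> N \<Longrightarrow> p = q"
  unfolding matching_def by blast

lemma Mp_sub: "matching' N \<Longrightarrow> assigned_p N p \<subseteq> S"
  unfolding assigned_p_def using mpair by blast

lemma Ml_sub: "matching' N \<Longrightarrow> assigned_l lec N l \<subseteq> S"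
  unfolding assigned_l_def using mpair by blast

lemma fin_Mp: "matching' N \<Longrightarrow> finite (assigned_p N p)"
  using Mp_sub finS finite_subset by blast

lemma fin_Ml: "matching' N \<Longrightarrow> finite (assigned_l lec N l)"
  using Ml_sub finS finite_subset by blast

lemma Mp_cap: "matching' N \<Longrightarrow> p \<in> P \<Longrightarrow> card (assigned_p N p) \<le> cp p"
  unfolding matching_def by blast

lemma Ml_cap: "matching' N \<Longrightarrow> l \<in> L \<Longrightarrow> card (assigned_l lec N l) \<le> cl l"
  unfolding matching_def by blast

lemma Mp_lp: "matching' N \<Longrightarrow> assigned_p N p \<subseteq> set (lpref (lec p))"
  unfolding assigned_p_def using mpair by blast

lemma Ml_lp: "matching' N \<Longrightarrow> assigned_l lec N l \<subseteq> set (lpref l)"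
  unfolding assigned_l_def using mpair by blast

lemma Mp_Ml: "assigned_p N p \<subseteq> assigned_l lec N (lec p)"
  unfolding assigned_p_def assigned_l_def by blast

lemma sum_group_L: "(\<Sum>l\<in>L. \<Sum>p\<in>{p\<in>P. lec p = l}. f p) = (\<Sum>p\<in>P. f p)"
  by (rule sum.group[OF finP finL]) (use lec_in in auto)

lemma card_Ml_sum:
  assumes "\<forall>(s, p)\<in>N. s \<in> S \<and> p \<in> P" "\<forall>s p q. (s, p) \<in> N \<longrightarrow> (s, q) \<in> N \<longrightarrow> p = q"
  shows "card (assigned_l lec N l) = (\<Sum>p\<in>{p\<in>P. lec p = l}. card (assigned_p N p))"
proof -
  have eq: "assigned_l lec N l = (\<Union>p\<in>{p\<in>P. lec p = l}. assigned_p N p)"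
    unfolding assigned_l_def assigned_p_def using assms(1) by blast
  have "card (\<Union>p\<in>{p\<in>P. lec p = l}. assigned_p N p) = (\<Sum>p\<in>{p\<in>P. lec p = l}. card (assigned_p N p))"
  proof (rule card_UN_disjoint)
    show "finite {p \<in> P. lec p = l}" using finP by auto
    show "\<forall>i\<in>{p \<in> P. lec p = l}. finite (assigned_p N i)"
      using finS assms(1) unfolding assigned_p_def
      by (auto intro: finite_subset[of _ S])
    show "\<forall>i\<in>{p \<in> P. lec p = l}. \<forall>j\<in>{p \<in> P. lec p = l}. i \<noteq> j \<longrightarrow> assigned_p N i \<inter> assigned_p N j = {}"
      using assms(2) unfolding assigned_p_def by blast
  qed
  then show ?thesis using eq by simp
qed

lemma card_dom_sum:
  assumes "\<forall>(s, p)\<in>N. s \<in> S \<and> p \<in> P" "\<forall>s p q. (s, p) \<in> N \<longrightarrow> (s, q) \<in> N \<longrightarrow> p = q"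
  shows "card {s. \<exists>p. (s, p) \<in> N} = (\<Sum>p\<in>P. card (assigned_p N p))"
proof -
  have eq: "{s. \<exists>p. (s, p) \<in> N} = (\<Union>p\<in>P. assigned_p N p)"
    unfolding assigned_p_def using assms(1) by blast
  have "card (\<Union>p\<in>P. assigned_p N p) = (\<Sum>p\<in>P. card (assigned_p N p))"
  proof (rule card_UN_disjoint)
    show "finite P" using finP .
    show "\<forall>i\<in>P. finite (assigned_p N i)"
      using finS assms(1) unfolding assigned_p_def
      by (auto intro: finite_subset[of _ S])
    show "\<forall>i\<in>P. \<forall>j\<in>P. i \<noteq> j \<longrightarrow> assigned_p N i \<inter> assigned_p N j = {}"
      using assms(2) unfolding assigned_p_def by blast
  qed
  then show ?thesis using eq by simp
qed

lemma NB:
  assumes st: "stable' N" and acc: "acceptable S spref lec lpref s p" and des: "desires spref N s p"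
  shows "(card (assigned_p N p) = cp p \<and> (\<forall>t\<in>assigned_p N p. prefers (lpref (lec p)) t s)) \<or>
         (card (assigned_p N p) < cp p \<and> card (assigned_l lec N (lec p)) = cl (lec p) \<and>
          s \<notin> assigned_l lec N (lec p) \<and> (\<forall>t\<in>assigned_l lec N (lec p). prefers (lpref (lec p)) t s))"
proof -
  have m: "matching' N" using st unfolding stable_def by simp
  have nb: "\<not> blocking_pair S spref lec lpref cp cl N s p" using st unfolding stable_def by blast
  have sS: "s \<in> S" and pP: "p \<in> P" and sl: "s \<in> set (lpref (lec p))"
    using acc spref_P unfolding acceptable_def by auto
  define l where "l = lec p"
  have lL: "l \<in> L" using pP lec_in l_def by simp
  have dl: "distinct (lpref l)" using dist_l lL .
  define Mp where "Mp = assigned_p N p"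
  define Ml where "Ml = assigned_l lec N l"
  have notin: "(s, p) \<notin> N" and d2: "(\<forall>q. (s, q) \<notin> N) \<or> (\<exists>q. (s, q) \<in> N \<and> prefers (spref s) p q)"
    using des unfolding desires_def by auto
  have nb': "\<not> ((card Mp < cp p \<and> card Ml < cl l) \<or>
      (card Mp < cp p \<and> card Ml = cl l \<and> s \<in> Ml) \<or>
      (card Mp < cp p \<and> card Ml = cl l \<and> prefers (lpref l) s (worst (lpref l) Ml)) \<or>
      (card Mp = cp p \<and> prefers (lpref l) s (worst (lpref l) Mp)))"
    using nb acc notin d2 unfolding blocking_pair_def Let_def Mp_def Ml_def l_def by blast
  have fMp: "finite Mp" and fMl: "finite Ml" using fin_Mp[OF m] fin_Ml[OF m] Mp_def Ml_def by auto
  have Mpl: "Mp \<subseteq> set (lpref l)" using Mp_lp[OF m] Mp_def l_def by simp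
  have Mll: "Ml \<subseteq> set (lpref l)" using Ml_lp[OF m] Ml_def by simp
  have sMp: "s \<notin> Mp" using notin Mp_def unfolding assigned_p_def by simp
  have cMp: "card Mp \<le> cp p" using Mp_cap[OF m pP] Mp_def by simp
  have cMl: "card Ml \<le> cl l" using Ml_cap[OF m lL] Ml_def by simp
  have key: "\<forall>t\<in>X. prefers (lpref l) t s"
    if X: "finite X" "X \<subseteq> set (lpref l)" "s \<notin> X" "\<not> prefers (lpref l) s (worst (lpref l) X)" for X
  proof
    fix t assume t: "t \<in> X"
    show "prefers (lpref l) t s"
    proof (rule ccontr)
      assume "\<not> prefers (lpref l) t s"
      then have "prefers (lpref l) s t" using prefers_total[of t "lpref l" s] t X sl l_def by auto
      then have "prefers (lpref l) s (worst (lpref l) X)"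
        using prefers_worst_iff[OF dl X(1) _ X(2)] t by blast
      then show False using X by simp
    qed
  qed
  show ?thesis
  proof (cases "card Mp = cp p")
    case True
    then have "\<forall>t\<in>Mp. prefers (lpref l) t s" using key[OF fMp Mpl sMp] nb' by blast
    then show ?thesis using True Mp_def l_def by simp
  next
    case False
    then have lt: "card Mp < cp p" using cMp by simp
    then have eqc: "card Ml = cl l" using nb' cMl by simp
    have "s \<notin> Ml" using nb' lt eqc by blast
    moreover have "\<forall>t\<in>Ml. prefers (lpref l) t s" using key[OF fMl Mll \<open>s \<notin> Ml\<close>] nb' lt eqc by blast
    ultimately show ?thesis using lt eqc Mp_def Ml_def l_def by simp
  qed
qed

end


lemma card3: "finite A \<Longrightarrow> finite B \<Longrightarrow> finite C \<Longrightarrow> A \<inter> B = {} \<Longrightarrow> A \<inter> C = {} \<Longrightarrow> B \<inter> C = {}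
  \<Longrightarrow> card (A \<union> B \<union> C) = card A + card B + card C"
proof -
  assume f: "finite A" "finite B" "finite C" and d: "A \<inter> B = {}" "A \<inter> C = {}" "B \<inter> C = {}"
  have "(A \<union> B) \<inter> C = {}" using d by blast
  then have "card (A \<union> B \<union> C) = card (A \<union> B) + card C" using f by (simp add: card_Un_disjoint)
  also have "card (A \<union> B) = card A + card B" using f d by (simp add: card_Un_disjoint)
  finally show ?thesis .
qed

definition Eset :: "('s \<times> 'p) set \<Rightarrow> ('s \<times> 'p) set \<Rightarrow> 'p \<Rightarrow> 's set" where
  "Eset M M' p = {s. (s, p) \<in> M \<and> (s, p) \<in> M'}"
definition Aset :: "('s \<Rightarrow> 'p list) \<Rightarrow> ('s \<times> 'p) set \<Rightarrow> ('s \<times> 'p) set \<Rightarrow> 'p \<Rightarrow> 's set" where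
  "Aset spref M M' p = {s. (s, p) \<in> M' \<and> (\<forall>r. (s, r) \<in> M \<longrightarrow> prefers (spref s) p r)}"
definition Xset :: "('s \<Rightarrow> 'p list) \<Rightarrow> ('s \<times> 'p) set \<Rightarrow> ('s \<times> 'p) set \<Rightarrow> 'p \<Rightarrow> 's set" where
  "Xset spref M M' p = {s. (s, p) \<in> M \<and> (\<exists>r. (s, r) \<in> M' \<and> prefers (spref s) r p)}"
definition Kset :: "('s \<Rightarrow> 'p list) \<Rightarrow> ('s \<times> 'p) set \<Rightarrow> ('s \<times> 'p) set \<Rightarrow> 'p \<Rightarrow> 's set" where
  "Kset spref M M' p = Eset M M' p \<union> Aset spref M M' p \<union> Aset spref M' M p"
definition Adef :: "'p set \<Rightarrow> ('p \<Rightarrow> 'l) \<Rightarrow> ('p \<Rightarrow> nat) \<Rightarrow> ('s \<Rightarrow> 'p list) \<Rightarrow> ('s \<times> 'p) set \<Rightarrow> ('s \<times> 'p) set \<Rightarrow> 'l \<Rightarrow> bool" where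
  "Adef P lec cp spref M M' l \<longleftrightarrow> (\<exists>p\<in>P. lec p = l \<and> Aset spref M M' p \<noteq> {} \<and> card (assigned_p M p) < cp p)"

lemma Eset_sym: "Eset M' M p = Eset M M' p" unfolding Eset_def by auto
lemma Kset_sym: "Kset spref M' M p = Kset spref M M' p" unfolding Kset_def Eset_def by auto
lemma join_worse_sym: "join_worse spref M' M = join_worse spref M M'" unfolding join_worse_def by auto

locale spa2 = spa +
  fixes M M'
  assumes stM: "stable S P L spref lec lpref cp cl M" and stM': "stable S P L spref lec lpref cp cl M'"
begin

lemma swap: "spa2 S P L spref lec lpref cp cl M' M"
  using inst stM stM' unfolding spa2_def spa2_axioms_def spa_def by simp

lemma EsymL: "Eset M' M p = Eset M M' p" by (rule Eset_sym)
lemma KsymL: "Kset spref M' M p = Kset spref M M' p" by (rule Kset_sym)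
lemma JsymL: "join_worse spref M' M = join_worse spref M M'" by (rule join_worse_sym)

abbreviation "Ap p \<equiv> Aset spref M M' p"
abbreviation "Bp p \<equiv> Aset spref M' M p"
abbreviation "Xp p \<equiv> Xset spref M M' p"
abbreviation "Yp p \<equiv> Xset spref M' M p"
abbreviation "Ep p \<equiv> Eset M M' p"
abbreviation "Kp p \<equiv> Kset spref M M' p"
abbreviation "J \<equiv> join_worse spref M M'"
abbreviation "Adf l \<equiv> Adef P lec cp spref M M' l"
abbreviation "Bdf l \<equiv> Adef P lec cp spref M' M l"

lemma mM: "matching' M" using stM unfolding stable_def by simp
lemma mM': "matching' M'" using stM' unfolding stable_def by simp

lemma Ep_fin: "finite (Ep p)" and Xp_fin: "finite (Xp p)" and Ap_fin: "finite (Ap p)"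
  and Yp_fin: "finite (Yp p)" and Bp_fin: "finite (Bp p)"
proof -
  have "Ep p \<subseteq> assigned_p M p" "Xp p \<subseteq> assigned_p M p" "Bp p \<subseteq> assigned_p M p"
       "Ap p \<subseteq> assigned_p M' p" "Yp p \<subseteq> assigned_p M' p"
    unfolding Eset_def Aset_def Xset_def assigned_p_def by auto
  then show "finite (Ep p)" "finite (Xp p)" "finite (Ap p)" "finite (Yp p)" "finite (Bp p)"
    using fin_Mp[OF mM] fin_Mp[OF mM'] finite_subset by metis+
qed

lemma decM: "assigned_p M p = Ep p \<union> Xp p \<union> Bp p"
proof -
  have "s \<in> Ep p \<union> Xp p \<union> Bp p" if s: "(s, p) \<in> M" for s
  proof -
    have sS: "s \<in> S" and ps: "p \<in> set (spref s)" using mpair[OF mM s] by auto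
    show ?thesis
    proof (cases "\<exists>r. (s, r) \<in> M'")
      case False
      then have "s \<in> Bp p" using s unfolding Aset_def by blast
      then show ?thesis by blast
    next
      case True
      then obtain r where r: "(s, r) \<in> M'" by blast
      have rs: "r \<in> set (spref s)" using mpair[OF mM' r] by blast
      have uq: "\<And>r'. (s, r') \<in> M' \<Longrightarrow> r' = r" using mfun[OF mM'] r by blast
      show ?thesis
      proof (cases "r = p")
        case True
        then have "s \<in> Ep p" using s r unfolding Eset_def by blast
        then show ?thesis by blast
      next
        case False
        then have "prefers (spref s) r p \<or> prefers (spref s) p r" using prefers_total[OF rs ps] by blast
        then show ?thesis
        proof
          assume "prefers (spref s) r p"
          then have "s \<in> Xp p" using s r unfolding Xset_def by blast
          then show ?thesis by blast
        next
          assume a: "prefers (spref s) p r"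
          have "s \<in> Bp p" unfolding Aset_def using s a uq by blast
          then show ?thesis by blast
        qed
      qed
    qed
  qed
  moreover have "Ep p \<union> Xp p \<union> Bp p \<subseteq> assigned_p M p"
    unfolding Eset_def Xset_def Aset_def assigned_p_def by blast
  ultimately show ?thesis unfolding assigned_p_def by blast
qed

lemma sM: "(s, q) \<in> M \<Longrightarrow> s \<in> S" using mpair[OF mM] by blast
lemma sM': "(s, q) \<in> M' \<Longrightarrow> s \<in> S" using mpair[OF mM'] by blast
lemma irrM: "(s, q) \<in> M \<Longrightarrow> \<not> prefers (spref s) r r"
  by (rule prefers_irrefl[OF dist_s[OF sM]])
lemma irrM': "(s, q) \<in> M' \<Longrightarrow> \<not> prefers (spref s) r r"
  by (rule prefers_irrefl[OF dist_s[OF sM']])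
lemma asyM: "(s, q) \<in> M \<Longrightarrow> prefers (spref s) a b \<Longrightarrow> \<not> prefers (spref s) b a"
  by (rule prefers_asym[OF dist_s[OF sM]])
lemma asyM': "(s, q) \<in> M' \<Longrightarrow> prefers (spref s) a b \<Longrightarrow> \<not> prefers (spref s) b a"
  by (rule prefers_asym[OF dist_s[OF sM']])

lemma disjM: "Ep p \<inter> Xp p = {}" "Ep p \<inter> Bp p = {}" "Xp p \<inter> Bp p = {}"
proof -
  show "Ep p \<inter> Xp p = {}"
  proof (rule ccontr)
    assume "Ep p \<inter> Xp p \<noteq> {}"
    then obtain s r where "(s, p) \<in> M'" "(s, r) \<in> M'" "prefers (spref s) r p"
      unfolding Eset_def Xset_def by blast
    then show False using mfun[OF mM'] irrM' by metis
  qed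
  show "Ep p \<inter> Bp p = {}"
  proof (rule ccontr)
    assume "Ep p \<inter> Bp p \<noteq> {}"
    then obtain s where "(s, p) \<in> M'" "prefers (spref s) p p"
      unfolding Eset_def Aset_def by blast
    then show False using irrM' by metis
  qed
  show "Xp p \<inter> Bp p = {}"
  proof (rule ccontr)
    assume "Xp p \<inter> Bp p \<noteq> {}"
    then obtain s r where "(s, r) \<in> M'" "prefers (spref s) r p" "prefers (spref s) p r"
      unfolding Xset_def Aset_def by blast
    then show False using asyM' by metis
  qed
qed

lemma card_M: "card (assigned_p M p) = card (Ep p) + card (Xp p) + card (Bp p)"
  unfolding decM by (rule card3) (use disjM Ep_fin Xp_fin Bp_fin in auto)

lemma decJ: "assigned_p J p = Ep p \<union> Xp p \<union> Yp p"
  unfolding assigned_p_def join_worse_def Eset_def Xset_def by auto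

lemma disjJ: "Ep p \<inter> Xp p = {}" "Ep p \<inter> Yp p = {}" "Xp p \<inter> Yp p = {}"
proof -
  show "Ep p \<inter> Xp p = {}" using disjM by simp
  show "Ep p \<inter> Yp p = {}"
  proof (rule ccontr)
    assume "Ep p \<inter> Yp p \<noteq> {}"
    then obtain s r where "(s, p) \<in> M" "(s, r) \<in> M" "prefers (spref s) r p"
      unfolding Eset_def Xset_def by blast
    then show False using mfun[OF mM] irrM by metis
  qed
  show "Xp p \<inter> Yp p = {}"
  proof (rule ccontr)
    assume "Xp p \<inter> Yp p \<noteq> {}"
    then obtain s r where "(s, p) \<in> M'" "(s, r) \<in> M'" "prefers (spref s) r p"
      unfolding Xset_def by blast
    then show False using mfun[OF mM'] irrM' by metis
  qed
qed

lemma card_J: "card (assigned_p J p) = card (Ep p) + card (Xp p) + card (Yp p)"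
  unfolding decJ by (rule card3) (use disjJ Ep_fin Xp_fin Yp_fin in auto)

lemma disjK: "Ep p \<inter> Ap p = {}" "Ep p \<inter> Bp p = {}" "Ap p \<inter> Bp p = {}"
proof -
  show "Ep p \<inter> Ap p = {}"
  proof (rule ccontr)
    assume "Ep p \<inter> Ap p \<noteq> {}"
    then obtain s where "(s, p) \<in> M" "prefers (spref s) p p"
      unfolding Eset_def Aset_def by blast
    then show False using irrM by metis
  qed
  show "Ep p \<inter> Bp p = {}" using disjM by simp
  show "Ap p \<inter> Bp p = {}"
  proof (rule ccontr)
    assume "Ap p \<inter> Bp p \<noteq> {}"
    then obtain s where "(s, p) \<in> M" "prefers (spref s) p p"
      unfolding Aset_def by blast
    then show False using irrM by metis
  qed
qed

lemma card_K: "card (Kp p) = card (Ep p) + card (Ap p) + card (Bp p)"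
  unfolding Kset_def by (rule card3) (use disjK Ep_fin Ap_fin Bp_fin in auto)


lemma accM': "(s, p) \<in> M' \<Longrightarrow> acceptable S spref lec lpref s p"
  using mM' unfolding matching_def by blast

lemma pPM: "(s, p) \<in> M \<Longrightarrow> p \<in> P" using mpair[OF mM] by blast
lemma pPM': "(s, p) \<in> M' \<Longrightarrow> p \<in> P" using mpair[OF mM'] by blast

lemma FactA:
  assumes "a \<in> Ap p"
  shows "(card (assigned_p M p) = cp p \<and> (\<forall>t\<in>assigned_p M p. prefers (lpref (lec p)) t a)) \<or>
         (card (assigned_p M p) < cp p \<and> card (assigned_l lec M (lec p)) = cl (lec p) \<and>
          a \<notin> assigned_l lec M (lec p) \<and> (\<forall>t\<in>assigned_l lec M (lec p). prefers (lpref (lec p)) t a))"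
proof -
  have ap: "(a, p) \<in> M'" and w: "\<forall>r. (a, r) \<in> M \<longrightarrow> prefers (spref a) p r"
    using assms unfolding Aset_def by auto
  have acc: "acceptable S spref lec lpref a p" using accM'[OF ap] .
  have "(a, p) \<notin> M"
  proof
    assume "(a, p) \<in> M"
    then have "prefers (spref a) p p" using w by blast
    then show False using irrM'[OF ap] by blast
  qed
  moreover have "(\<forall>q. (a, q) \<notin> M) \<or> (\<exists>q. (a, q) \<in> M \<and> prefers (spref a) p q)"
    using w by blast
  ultimately have "desires spref M a p" unfolding desires_def by blast
  then show ?thesis using NB[OF stM acc] by blast
qed

lemma F1: "Ap p = {} \<or> Bp p = {}"
proof (rule ccontr)
  assume "\<not> (Ap p = {} \<or> Bp p = {})"
  then obtain a b where a: "a \<in> Ap p" and b: "b \<in> Bp p" by blast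
  interpret sw: spa2 S P L spref lec lpref cp cl M' M by (rule swap)
  have aM': "(a, p) \<in> M'" using a unfolding Aset_def by blast
  have bM: "(b, p) \<in> M" using b unfolding Aset_def by blast
  have lL: "lec p \<in> L" using lec_in pPM[OF bM] by blast
  have bMl: "b \<in> assigned_l lec M (lec p)" and bMp: "b \<in> assigned_p M p"
    using bM unfolding assigned_l_def assigned_p_def by auto
  have aMl: "a \<in> assigned_l lec M' (lec p)" and aMp: "a \<in> assigned_p M' p"
    using aM' unfolding assigned_l_def assigned_p_def by auto
  have 1: "prefers (lpref (lec p)) b a" using FactA[OF a] bMl bMp by blast
  have 2: "prefers (lpref (lec p)) a b" using sw.FactA[OF b] aMl aMp by blast
  show False using prefers_asym[OF dist_l[OF lL] 1] 2 by blast
qed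


lemma Adef_full:
  assumes "Adf l" shows "card (assigned_l lec M l) = cl l"
proof -
  obtain p a where p: "p \<in> P" "lec p = l" and a: "a \<in> Ap p" and c: "card (assigned_p M p) < cp p"
    using assms unfolding Adef_def by blast
  show ?thesis using FactA[OF a] c p by auto
qed

lemma F2: "\<not> (Adf l \<and> Bdf l)"
proof
  assume "Adf l \<and> Bdf l"
  then obtain p a q b where p: "p \<in> P" "lec p = l" and a: "a \<in> Ap p" and c: "card (assigned_p M p) < cp p"
    and q: "q \<in> P" "lec q = l" and b: "b \<in> Bp q" and c': "card (assigned_p M' q) < cp q"
    unfolding Adef_def by blast
  interpret sw: spa2 S P L spref lec lpref cp cl M' M by (rule swap)
  have lL: "l \<in> L" using lec_in p by blast
  have aM': "(a, p) \<in> M'" using a unfolding Aset_def by blast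
  have bM: "(b, q) \<in> M" using b unfolding Aset_def by blast
  have bMl: "b \<in> assigned_l lec M l" using bM q unfolding assigned_l_def by auto
  have aMl: "a \<in> assigned_l lec M' l" using aM' p unfolding assigned_l_def by auto
  have 1: "prefers (lpref l) b a" using FactA[OF a] c p bMl by auto
  have 2: "prefers (lpref l) a b" using sw.FactA[OF b] c' q aMl by auto
  show False using prefers_asym[OF dist_l[OF lL] 1] 2 by blast
qed

lemma C1:
  assumes "p \<in> P" "\<not> (Ap p \<noteq> {} \<and> card (assigned_p M p) < cp p)"
  shows "card (Kp p) \<le> card (assigned_p M p)"
proof (cases "Ap p = {}")
  case True then show ?thesis using card_K card_M by simp
next
  case False
  interpret sw: spa2 S P L spref lec lpref cp cl M' M by (rule swap)
  have B: "Bp p = {}" using F1 False by blast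
  have "card (Kp p) = card (Ep p) + card (Ap p)" using card_K B by simp
  also have "\<dots> \<le> card (assigned_p M' p)" using sw.card_M EsymL by simp
  also have "\<dots> \<le> cp p" using Mp_cap[OF mM' assms(1)] .
  also have "\<dots> \<le> card (assigned_p M p)" using assms False by simp
  finally show ?thesis .
qed

lemma mMprops: "\<forall>(s, p)\<in>M. s \<in> S \<and> p \<in> P" "\<forall>s p q. (s, p) \<in> M \<longrightarrow> (s, q) \<in> M \<longrightarrow> p = q"
  using mpair[OF mM] mfun[OF mM] by blast+

lemma C3:
  assumes lL: "l \<in> L"
  shows "(\<Sum>p\<in>{p\<in>P. lec p = l}. card (Kp p)) \<le> card (assigned_l lec M l)"
proof (cases "Adf l")
  case False
  have "(\<Sum>p\<in>{p\<in>P. lec p = l}. card (Kp p)) \<le> (\<Sum>p\<in>{p\<in>P. lec p = l}. card (assigned_p M p))"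
  proof (rule sum_mono)
    fix p assume "p \<in> {p\<in>P. lec p = l}"
    then show "card (Kp p) \<le> card (assigned_p M p)" using C1 False unfolding Adef_def by blast
  qed
  also have "\<dots> = card (assigned_l lec M l)" using card_Ml_sum[OF mMprops] by simp
  finally show ?thesis .
next
  case True
  interpret sw: spa2 S P L spref lec lpref cp cl M' M by (rule swap)
  have nB: "\<not> Bdf l" using F2 True by blast
  have "(\<Sum>p\<in>{p\<in>P. lec p = l}. card (Kp p)) \<le> (\<Sum>p\<in>{p\<in>P. lec p = l}. card (assigned_p M' p))"
  proof (rule sum_mono)
    fix p assume "p \<in> {p\<in>P. lec p = l}"
    then show "card (Kp p) \<le> card (assigned_p M' p)" using sw.C1[of p] nB KsymL unfolding Adef_def by auto
  qed
  also have "\<dots> = card (assigned_l lec M' l)" using card_Ml_sum[OF sw.mMprops] by simp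
  also have "\<dots> \<le> cl l" using Ml_cap[OF mM' lL] .
  also have "\<dots> = card (assigned_l lec M l)" using Adef_full[OF True] by simp
  finally show ?thesis .
qed

lemma Kchar:
  assumes "s \<in> Kp p"
  shows "((s, p) \<in> M \<and> (\<forall>r. (s, r) \<in> M' \<longrightarrow> r = p \<or> prefers (spref s) p r)) \<or>
         ((s, p) \<in> M' \<and> (\<forall>r. (s, r) \<in> M \<longrightarrow> r = p \<or> prefers (spref s) p r))"
  using assms mfun[OF mM'] unfolding Kset_def Eset_def Aset_def by blast

lemma K_disj:
  assumes "s \<in> Kp p" "s \<in> Kp p'" shows "p = p'"
proof (rule ccontr)
  assume ne: "p \<noteq> p'"
  note k1 = Kchar[OF assms(1)] and k2 = Kchar[OF assms(2)]
  show False
  proof (cases "(s, p) \<in> M \<and> (\<forall>r. (s, r) \<in> M' \<longrightarrow> r = p \<or> prefers (spref s) p r)")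
    case True
    then have sp: "(s, p) \<in> M" and h: "\<forall>r. (s, r) \<in> M' \<longrightarrow> r = p \<or> prefers (spref s) p r" by auto
    show False
    proof (cases "(s, p') \<in> M")
      case True then show False using mfun[OF mM sp] ne by blast
    next
      case False
      then have sp': "(s, p') \<in> M'" and h': "\<forall>r. (s, r) \<in> M \<longrightarrow> r = p' \<or> prefers (spref s) p' r"
        using k2 by auto
      have "prefers (spref s) p p'" using h sp' ne by blast
      moreover have "prefers (spref s) p' p" using h' sp ne by blast
      ultimately show False using asyM[OF sp] by blast
    qed
  next
    case False
    then have sp: "(s, p) \<in> M'" and h: "\<forall>r. (s, r) \<in> M \<longrightarrow> r = p \<or> prefers (spref s) p r" using k1 by auto
    show False
    proof (cases "(s, p') \<in> M'")
      case True then show False using mfun[OF mM' sp] ne by blast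
    next
      case False
      then have sp': "(s, p') \<in> M" and h': "\<forall>r. (s, r) \<in> M' \<longrightarrow> r = p' \<or> prefers (spref s) p' r"
        using k2 by auto
      have "prefers (spref s) p p'" using h sp' ne by blast
      moreover have "prefers (spref s) p' p" using h' sp ne by blast
      ultimately show False using asyM'[OF sp] by blast
    qed
  qed
qed

lemma domM_K:
  assumes sp: "(s, p) \<in> M" shows "\<exists>q\<in>P. s \<in> Kp q"
proof (cases "\<exists>r. (s, r) \<in> M'")
  case False
  then have "s \<in> Bp p" using sp unfolding Aset_def by blast
  then show ?thesis using pPM[OF sp] unfolding Kset_def by blast
next
  case True
  then obtain r where r: "(s, r) \<in> M'" by blast
  have uq: "\<And>r'. (s, r') \<in> M' \<Longrightarrow> r' = r" using mfun[OF mM'] r by blast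
  have uq': "\<And>r'. (s, r') \<in> M \<Longrightarrow> r' = p" using mfun[OF mM] sp by blast
  have rs: "r \<in> set (spref s)" and ps: "p \<in> set (spref s)" using mpair[OF mM' r] mpair[OF mM sp] by auto
  show ?thesis
  proof (cases "r = p")
    case True
    then have "s \<in> Ep p" using sp r unfolding Eset_def by blast
    then show ?thesis using pPM[OF sp] unfolding Kset_def by blast
  next
    case False
    then have "prefers (spref s) r p \<or> prefers (spref s) p r" using prefers_total[OF rs ps] by blast
    then show ?thesis
    proof
      assume a: "prefers (spref s) r p"
      have "s \<in> Ap r" unfolding Aset_def using r a uq' by blast
      then show ?thesis using pPM'[OF r] unfolding Kset_def by blast
    next
      assume a: "prefers (spref s) p r"
      have "s \<in> Bp p" unfolding Aset_def using sp a uq by blast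
      then show ?thesis using pPM[OF sp] unfolding Kset_def by blast
    qed
  qed
qed

lemma Kp_sub: "Kp p \<subseteq> {s. (\<exists>q. (s, q) \<in> M) \<or> (\<exists>q. (s, q) \<in> M')}"
  unfolding Kset_def Eset_def Aset_def by blast

lemma Kp_fin: "finite (Kp p)"
  unfolding Kset_def using Ep_fin Ap_fin Bp_fin by blast

lemma card_D:
  "card {s. (\<exists>q. (s, q) \<in> M) \<or> (\<exists>q. (s, q) \<in> M')} = (\<Sum>p\<in>P. card (Kp p))"
proof -
  interpret sw: spa2 S P L spref lec lpref cp cl M' M by (rule swap)
  have eq: "{s. (\<exists>q. (s, q) \<in> M) \<or> (\<exists>q. (s, q) \<in> M')} = (\<Union>p\<in>P. Kp p)"
  proof
    show "{s. (\<exists>q. (s, q) \<in> M) \<or> (\<exists>q. (s, q) \<in> M')} \<subseteq> (\<Union>p\<in>P. Kp p)"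
    proof
      fix s assume "s \<in> {s. (\<exists>q. (s, q) \<in> M) \<or> (\<exists>q. (s, q) \<in> M')}"
      then have "(\<exists>q. (s, q) \<in> M) \<or> (\<exists>q. (s, q) \<in> M')" by simp
      then show "s \<in> (\<Union>p\<in>P. Kp p)"
      proof
        assume "\<exists>q. (s, q) \<in> M" then show ?thesis using domM_K by blast
      next
        assume "\<exists>q. (s, q) \<in> M'" then obtain q where "(s, q) \<in> M'" by blast
        then show ?thesis using sw.domM_K[of s q] KsymL by auto
      qed
    qed
    show "(\<Union>p\<in>P. Kp p) \<subseteq> {s. (\<exists>q. (s, q) \<in> M) \<or> (\<exists>q. (s, q) \<in> M')}"
      using Kp_sub by blast
  qed
  have "card (\<Union>p\<in>P. Kp p) = (\<Sum>p\<in>P. card (Kp p))"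
  proof (rule card_UN_disjoint)
    show "finite P" using finP .
    show "\<forall>i\<in>P. finite (Kp i)" using Kp_fin by blast
    show "\<forall>i\<in>P. \<forall>j\<in>P. i \<noteq> j \<longrightarrow> Kp i \<inter> Kp j = {}" using K_disj by blast
  qed
  then show ?thesis using eq by simp
qed

lemma fin_D: "finite {s. (\<exists>q. (s, q) \<in> M) \<or> (\<exists>q. (s, q) \<in> M')}"
  using finS sM sM' by (auto intro: finite_subset[of _ S])

lemma count_main:
  "{s. (\<exists>q. (s, q) \<in> M) \<or> (\<exists>q. (s, q) \<in> M')} = {s. \<exists>q. (s, q) \<in> M} \<and>
   (\<forall>l\<in>L. (\<Sum>p\<in>{p\<in>P. lec p = l}. card (Kp p)) = card (assigned_l lec M l))"
proof -
  let ?D = "{s. (\<exists>q. (s, q) \<in> M) \<or> (\<exists>q. (s, q) \<in> M')}"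
  let ?DM = "{s. \<exists>q. (s, q) \<in> M}"
  have "card ?D = (\<Sum>l\<in>L. \<Sum>p\<in>{p\<in>P. lec p = l}. card (Kp p))" using card_D sum_group_L[of "\<lambda>p. card (Kp p)"] by simp
  also have "\<dots> \<le> (\<Sum>l\<in>L. card (assigned_l lec M l))" using C3 by (rule sum_mono)
  also have "\<dots> = (\<Sum>l\<in>L. \<Sum>p\<in>{p\<in>P. lec p = l}. card (assigned_p M p))"
    using card_Ml_sum[OF mMprops] by simp
  also have "\<dots> = card ?DM" using sum_group_L[of "\<lambda>p. card (assigned_p M p)"] card_dom_sum[OF mMprops] by simp
  finally have le: "card ?D \<le> card ?DM" .
  have sub: "?DM \<subseteq> ?D" by blast
  have eqD: "?D = ?DM" using card_seteq[OF fin_D sub le] by simp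
  have eqs: "(\<Sum>l\<in>L. \<Sum>p\<in>{p\<in>P. lec p = l}. card (Kp p)) = (\<Sum>l\<in>L. card (assigned_l lec M l))"
  proof -
    have "(\<Sum>l\<in>L. \<Sum>p\<in>{p\<in>P. lec p = l}. card (Kp p)) = card ?D" using card_D sum_group_L[of "\<lambda>p. card (Kp p)"] by simp
    also have "\<dots> = card ?DM" using eqD by simp
    also have "\<dots> = (\<Sum>l\<in>L. card (assigned_l lec M l))"
      using sum_group_L[of "\<lambda>p. card (assigned_p M p)"] card_dom_sum[OF mMprops] card_Ml_sum[OF mMprops] by simp
    finally show ?thesis .
  qed
  have "\<forall>l\<in>L. (\<Sum>p\<in>{p\<in>P. lec p = l}. card (Kp p)) = card (assigned_l lec M l)"
    using sum_mono_inv[OF eqs C3 _ finL] by blast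
  then show ?thesis using eqD by blast
qed


lemma R1: "(s, q) \<in> M' \<Longrightarrow> \<exists>r. (s, r) \<in> M"
  using count_main by blast

lemma KL: "l \<in> L \<Longrightarrow> (\<Sum>p\<in>{p\<in>P. lec p = l}. card (Kp p)) = card (assigned_l lec M l)"
  using count_main by blast

lemma MLeq: "l \<in> L \<Longrightarrow> card (assigned_l lec M l) = card (assigned_l lec M' l)"
proof -
  assume lL: "l \<in> L"
  interpret sw: spa2 S P L spref lec lpref cp cl M' M by (rule swap)
  show ?thesis using KL[OF lL] sw.KL[OF lL] KsymL by simp
qed

lemma TA:
  assumes pP: "p \<in> P" and nA: "\<not> Adf (lec p)"
  shows "card (Ap p) = card (Xp p)"
proof -
  define l where "l = lec p"
  have lL: "l \<in> L" using lec_in pP l_def by simp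
  have eqs: "(\<Sum>p\<in>{p\<in>P. lec p = l}. card (Kp p)) = (\<Sum>p\<in>{p\<in>P. lec p = l}. card (assigned_p M p))"
    using KL[OF lL] card_Ml_sum[OF mMprops] by simp
  have le: "\<And>q. q \<in> {p\<in>P. lec p = l} \<Longrightarrow> card (Kp q) \<le> card (assigned_p M q)"
  proof -
    fix q assume q: "q \<in> {p\<in>P. lec p = l}"
    then have "\<not> (Ap q \<noteq> {} \<and> card (assigned_p M q) < cp q)" using nA l_def unfolding Adef_def by blast
    then show "card (Kp q) \<le> card (assigned_p M q)" using C1 q by blast
  qed
  have "card (Kp p) = card (assigned_p M p)"
    using sum_mono_inv[OF eqs le, of p] pP l_def finP by simp
  then show ?thesis using card_K card_M by simp
qed

lemma JC:
  assumes pP: "p \<in> P" and nB: "\<not> Bdf (lec p)"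
  shows "card (assigned_p J p) = card (assigned_p M p)"
proof -
  interpret sw: spa2 S P L spref lec lpref cp cl M' M by (rule swap)
  have "card (Bp p) = card (Yp p)" using sw.TA[OF pP nB] .
  then show ?thesis using card_J card_M by simp
qed

lemma CP_aux:
  assumes pP: "p \<in> P" and B0: "Bp p = {}"
  shows "assigned_p J p = assigned_p M p \<or> assigned_p J p = assigned_p M' p"
proof -
  interpret sw: spa2 S P L spref lec lpref cp cl M' M by (rule swap)
  have dM: "assigned_p M p = Ep p \<union> Xp p" using decM B0 by simp
  have dJ: "assigned_p J p = Ep p \<union> Xp p \<union> Yp p" using decJ .
  have dM': "assigned_p M' p = Ep p \<union> Yp p \<union> Ap p" using sw.decM EsymL by simp
  show ?thesis
  proof (cases "Yp p = {}")
    case True then show ?thesis using dM dJ by simp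
  next
    case False
    have Bd: "Bdf (lec p)"
    proof (rule ccontr)
      assume "\<not> Bdf (lec p)"
      then have "card (Bp p) = card (Yp p)" using sw.TA[OF pP] by simp
      then have "card (Yp p) = 0" using B0 by simp
      then show False using False Yp_fin by simp
    qed
    then have nA: "\<not> Adf (lec p)" using F2 by blast
    then have cAX: "card (Ap p) = card (Xp p)" using TA[OF pP] by simp
    have A0: "Ap p = {}"
    proof (rule ccontr)
      assume "Ap p \<noteq> {}"
      then obtain a where a: "a \<in> Ap p" by blast
      have full: "card (assigned_p M p) = cp p"
      proof (rule ccontr)
        assume "card (assigned_p M p) \<noteq> cp p"
        then have "card (assigned_p M p) < cp p" using FactA[OF a] by auto
        then have "Adf (lec p)" using a pP unfolding Adef_def by blast
        then show False using nA by blast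
      qed
      have "card (assigned_p M' p) = card (Ep p) + card (Yp p) + card (Ap p)"
        using sw.card_M EsymL by simp
      moreover have "card (assigned_p M p) = card (Ep p) + card (Xp p)" using card_M B0 by simp
      moreover have "card (Yp p) > 0" using False Yp_fin by (simp add: card_gt_0_iff)
      moreover have "card (assigned_p M' p) \<le> cp p" using Mp_cap[OF mM' pP] .
      ultimately show False using full cAX by linarith
    qed
    then have "Xp p = {}" using cAX Xp_fin by simp
    then show ?thesis using dJ dM' A0 by simp
  qed
qed

lemma ClaimP:
  assumes pP: "p \<in> P"
  shows "assigned_p J p = assigned_p M p \<or> assigned_p J p = assigned_p M' p"
proof -
  interpret sw: spa2 S P L spref lec lpref cp cl M' M by (rule swap)
  show ?thesis
  proof (cases "Bp p = {}")
    case True then show ?thesis using CP_aux[OF pP] by blast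
  next
    case False
    then have "Ap p = {}" using F1 by blast
    then show ?thesis using sw.CP_aux[OF pP] JsymL by auto
  qed
qed

lemma G:
  assumes pP: "p \<in> P" and nA: "\<not> Adf (lec p)" and sX: "s \<in> Xp p"
  shows "\<exists>a\<in>Ap p. prefers (lpref (lec p)) s a"
proof -
  have "card (Ap p) = card (Xp p)" using TA[OF pP nA] .
  moreover have "card (Xp p) > 0" using sX Xp_fin by (auto simp: card_gt_0_iff)
  ultimately have "Ap p \<noteq> {}" by auto
  then obtain a where a: "a \<in> Ap p" by blast
  have full: "card (assigned_p M p) = cp p \<and> (\<forall>t\<in>assigned_p M p. prefers (lpref (lec p)) t a)"
  proof -
    have "\<not> card (assigned_p M p) < cp p"
    proof
      assume "card (assigned_p M p) < cp p"
      then have "Adf (lec p)" using a pP unfolding Adef_def by blast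
      then show False using nA by blast
    qed
    then show ?thesis using FactA[OF a] by auto
  qed
  have "s \<in> assigned_p M p" using sX unfolding Xset_def assigned_p_def by blast
  then show ?thesis using full a by blast
qed


lemma Jsub: "(s, p) \<in> J \<Longrightarrow> (s, p) \<in> M \<or> (s, p) \<in> M'"
  unfolding join_worse_def by blast

lemma Jmem: "(s, p) \<in> J \<longleftrightarrow> ((s, p) \<in> M \<and> (s, p) \<in> M') \<or>
     ((s, p) \<in> M \<and> (\<exists>q. (s, q) \<in> M' \<and> prefers (spref s) q p)) \<or>
     ((s, p) \<in> M' \<and> (\<exists>q. (s, q) \<in> M \<and> prefers (spref s) q p))"
  unfolding join_worse_def by simp

lemma Jfun_aux:
  assumes a: "(s, p) \<in> J" and b: "(s, q) \<in> J" and pM: "(s, p) \<in> M" and qM': "(s, q) \<in> M'"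
  shows "p = q"
proof (rule ccontr)
  assume ne: "p \<noteq> q"
  have pM'n: "(s, p) \<notin> M'"
  proof
    assume "(s, p) \<in> M'" then have "p = q" using mfun[OF mM' _ qM'] by blast
    then show False using ne by blast
  qed
  have qMn: "(s, q) \<notin> M"
  proof
    assume "(s, q) \<in> M" then have "p = q" using mfun[OF mM pM] by blast
    then show False using ne by blast
  qed
  obtain r where r: "(s, r) \<in> M'" "prefers (spref s) r p" using a pM'n Jmem by blast
  have "r = q" using mfun[OF mM' r(1) qM'] .
  then have 1: "prefers (spref s) q p" using r by simp
  obtain r' where r': "(s, r') \<in> M" "prefers (spref s) r' q" using b qMn Jmem by blast
  have "r' = p" using mfun[OF mM r'(1) pM] .
  then have 2: "prefers (spref s) p q" using r' by simp
  show False using asyM[OF pM 1] 2 by blast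
qed

lemma Jfun:
  assumes a: "(s, p) \<in> J" and b: "(s, q) \<in> J" shows "p = q"
proof -
  have c1: "(s, p) \<in> M \<or> (s, p) \<in> M'" using Jsub[OF a] .
  have c2: "(s, q) \<in> M \<or> (s, q) \<in> M'" using Jsub[OF b] .
  show ?thesis
  proof (cases "(s, p) \<in> M")
    case True
    show ?thesis
    proof (cases "(s, q) \<in> M")
      case True2: True
      show ?thesis by (rule mfun[OF mM True True2])
    next
      case False then show ?thesis using Jfun_aux[OF a b True] c2 by blast
    qed
  next
    case False
    then have pM': "(s, p) \<in> M'" using c1 by blast
    show ?thesis
    proof (cases "(s, q) \<in> M'")
      case True
      show ?thesis by (rule mfun[OF mM' pM' True])
    next
      case False
      then have "(s, q) \<in> M" using c2 by blast
      then show ?thesis using Jfun_aux[OF b a _ pM'] by simp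
    qed
  qed
qed

lemma Jprops: "\<forall>(s, p)\<in>J. s \<in> S \<and> p \<in> P" "\<forall>s p q. (s, p) \<in> J \<longrightarrow> (s, q) \<in> J \<longrightarrow> p = q"
proof -
  show "\<forall>(s, p)\<in>J. s \<in> S \<and> p \<in> P"
  proof
    fix x assume x: "x \<in> J"
    obtain s p where xe: "x = (s, p)" by (cases x)
    have "(s, p) \<in> M \<or> (s, p) \<in> M'" using Jsub x xe by blast
    then show "case x of (s, p) \<Rightarrow> s \<in> S \<and> p \<in> P" using mpair[OF mM] mpair[OF mM'] xe by blast
  qed
  show "\<forall>s p q. (s, p) \<in> J \<longrightarrow> (s, q) \<in> J \<longrightarrow> p = q" using Jfun by blast
qed

lemma JL: assumes lL: "l \<in> L" shows "card (assigned_l lec J l) = card (assigned_l lec M l)"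
proof (cases "Bdf l")
  case False
  have "card (assigned_l lec J l) = (\<Sum>p\<in>{p\<in>P. lec p = l}. card (assigned_p J p))"
    using card_Ml_sum[OF Jprops] by simp
  also have "\<dots> = (\<Sum>p\<in>{p\<in>P. lec p = l}. card (assigned_p M p))"
    using JC False by (intro sum.cong) auto
  also have "\<dots> = card (assigned_l lec M l)" using card_Ml_sum[OF mMprops] by simp
  finally show ?thesis .
next
  case True
  interpret sw: spa2 S P L spref lec lpref cp cl M' M by (rule swap)
  have nA: "\<not> Adf l" using F2 True by blast
  have "card (assigned_l lec J l) = (\<Sum>p\<in>{p\<in>P. lec p = l}. card (assigned_p J p))"
    using card_Ml_sum[OF Jprops] by simp
  also have "\<dots> = (\<Sum>p\<in>{p\<in>P. lec p = l}. card (assigned_p M' p))"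
  proof (intro sum.cong refl)
    fix p assume "p \<in> {p\<in>P. lec p = l}"
    then show "card (assigned_p J p) = card (assigned_p M' p)" using sw.JC[of p] nA JsymL by auto
  qed
  also have "\<dots> = card (assigned_l lec M' l)" using card_Ml_sum[OF sw.mMprops] by simp
  also have "\<dots> = card (assigned_l lec M l)" using MLeq[OF lL] by simp
  finally show ?thesis .
qed

lemma Jmatch: "matching' J"
  unfolding matching_def
proof (intro conjI)
  show "\<forall>(s, p)\<in>J. acceptable S spref lec lpref s p"
    using Jsub mM mM' unfolding matching_def by blast
  show "\<forall>s p q. (s, p) \<in> J \<longrightarrow> (s, q) \<in> J \<longrightarrow> p = q" using Jfun by blast
  show "\<forall>p\<in>P. card (assigned_p J p) \<le> cp p"
    using ClaimP Mp_cap[OF mM] Mp_cap[OF mM'] by metis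
  show "\<forall>l\<in>L. card (assigned_l lec J l) \<le> cl l"
    using JL Ml_cap[OF mM] by simp
qed

lemma domJ:
  assumes sq: "(s, q) \<in> M" shows "\<exists>r. (s, r) \<in> J"
proof -
  interpret sw: spa2 S P L spref lec lpref cp cl M' M by (rule swap)
  obtain r where r: "(s, r) \<in> M'" using sw.R1[OF sq] by blast
  have rs: "r \<in> set (spref s)" and qs: "q \<in> set (spref s)" using mpair[OF mM' r] mpair[OF mM sq] by auto
  show ?thesis
  proof (cases "q = r")
    case True then show ?thesis using sq r unfolding join_worse_def by blast
  next
    case False
    then have "prefers (spref s) q r \<or> prefers (spref s) r q" using prefers_total[OF qs rs] by blast
    then show ?thesis
    proof
      assume "prefers (spref s) q r"
      then have "(s, r) \<in> J" using sq r unfolding join_worse_def by blast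
      then show ?thesis by blast
    next
      assume "prefers (spref s) r q"
      then have "(s, q) \<in> J" using sq r unfolding join_worse_def by blast
      then show ?thesis by blast
    qed
  qed
qed

lemma J_desires:
  assumes "desires spref J s p"
  shows "desires spref M s p \<or> desires spref M' s p"
proof -
  have nJ: "(s, p) \<notin> J" and d: "(\<forall>q. (s, q) \<notin> J) \<or> (\<exists>q. (s, q) \<in> J \<and> prefers (spref s) p q)"
    using assms unfolding desires_def by auto
  show ?thesis using d
  proof
    assume un: "\<forall>q. (s, q) \<notin> J"
    then have uM: "\<forall>q. (s, q) \<notin> M" using domJ by blast
    then show ?thesis unfolding desires_def by blast
  next
    assume "\<exists>q. (s, q) \<in> J \<and> prefers (spref s) p q"
    then obtain q where q: "(s, q) \<in> J" "prefers (spref s) p q" by blast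
    show ?thesis
    proof (cases "(s, q) \<in> M")
      case True
      have "(s, p) \<notin> M"
      proof
        assume "(s, p) \<in> M"
        then have "p = q" using mfun[OF mM _ True] by blast
        then show False using q(2) irrM[OF True] by blast
      qed
      then show ?thesis using True q unfolding desires_def by blast
    next
      case False
      then have qM': "(s, q) \<in> M'" using Jsub q(1) by blast
      have "(s, p) \<notin> M'"
      proof
        assume "(s, p) \<in> M'"
        then have "p = q" using mfun[OF mM' _ qM'] by blast
        then show False using q(2) irrM'[OF qM'] by blast
      qed
      then show ?thesis using qM' q unfolding desires_def by blast
    qed
  qed
qed

lemma H:
  assumes lL: "l \<in> L" and below: "\<forall>t\<in>assigned_l lec M l. prefers (lpref l) t s"
  shows "\<forall>w\<in>assigned_l lec J l. prefers (lpref l) w s"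
proof
  interpret sw: spa2 S P L spref lec lpref cp cl M' M by (rule swap)
  have dl: "distinct (lpref l)" using dist_l[OF lL] .
  fix w assume "w \<in> assigned_l lec J l"
  then obtain q where wq: "(w, q) \<in> J" and ql: "lec q = l" unfolding assigned_l_def by blast
  show "prefers (lpref l) w s"
  proof (cases "(w, q) \<in> M")
    case True
    then have "w \<in> assigned_l lec M l" using ql unfolding assigned_l_def by blast
    then show ?thesis using below by blast
  next
    case False
    then have wM': "(w, q) \<in> M'" using Jsub wq by blast
    have "\<exists>r. (w, r) \<in> M \<and> prefers (spref w) r q" using wq False unfolding join_worse_def by blast
    then have wY: "w \<in> Yp q" using wM' unfolding Xset_def by blast
    have qP: "q \<in> P" using pPM'[OF wM'] .
    have wML': "w \<in> assigned_l lec M' l" using wM' ql unfolding assigned_l_def by blast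
    show ?thesis
    proof (cases "Bdf l")
      case False
      have nB: "\<not> Adef P lec cp spref M' M (lec q)" using False ql by simp
      obtain b where b: "b \<in> Bp q" "prefers (lpref l) w b" using sw.G[OF qP nB wY] ql by auto
      have "b \<in> assigned_l lec M l" using b(1) ql unfolding Aset_def assigned_l_def by blast
      then have "prefers (lpref l) b s" using below by blast
      then show ?thesis using prefers_trans[OF dl b(2)] by blast
    next
      case True
      then obtain q0 b0 where q0: "q0 \<in> P" "lec q0 = l" and b0: "b0 \<in> Bp q0"
        and c0: "card (assigned_p M' q0) < cp q0" unfolding Adef_def by blast
      have "\<forall>t\<in>assigned_l lec M' l. prefers (lpref l) t b0" using sw.FactA[OF b0] c0 q0 by auto
      then have 1: "prefers (lpref l) w b0" using wML' by blast
      have "b0 \<in> assigned_l lec M l" using b0 q0 unfolding Aset_def assigned_l_def by blast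
      then have "prefers (lpref l) b0 s" using below by blast
      then show ?thesis using prefers_trans[OF dl 1] by blast
    qed
  qed
qed

lemma Hp:
  assumes pP: "p \<in> P" and full: "card (assigned_p M p) = cp p"
    and below: "\<forall>t\<in>assigned_p M p. prefers (lpref (lec p)) t s"
  shows "\<forall>w\<in>assigned_p J p. prefers (lpref (lec p)) w s"
proof
  interpret sw: spa2 S P L spref lec lpref cp cl M' M by (rule swap)
  have lL: "lec p \<in> L" using lec_in[OF pP] .
  have dl: "distinct (lpref (lec p))" using dist_l[OF lL] .
  fix w assume wJ: "w \<in> assigned_p J p"
  show "prefers (lpref (lec p)) w s"
  proof (cases "w \<in> assigned_p M p")
    case True then show ?thesis using below by blast
  next
    case False
    then have JM': "assigned_p J p = assigned_p M' p" using ClaimP[OF pP] wJ by auto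
    have wM': "w \<in> assigned_p M' p" using wJ JM' by simp
    have "Bp p \<noteq> {}"
    proof
      assume B0: "Bp p = {}"
      have "assigned_p M p \<subseteq> assigned_p J p" using decM decJ B0 by auto
      then have "assigned_p M p \<subset> assigned_p M' p" using JM' wM' False by auto
      then have "card (assigned_p M p) < card (assigned_p M' p)"
        using psubset_card_mono fin_Mp[OF mM'] by blast
      then show False using full Mp_cap[OF mM' pP] by simp
    qed
    then obtain b where b: "b \<in> Bp p" by blast
    have bM: "b \<in> assigned_p M p" using b unfolding Aset_def assigned_p_def by blast
    have wML': "w \<in> assigned_l lec M' (lec p)" using wM' unfolding assigned_p_def assigned_l_def by blast
    have 1: "prefers (lpref (lec p)) w b" using sw.FactA[OF b] wM' wML' by blast
    have "prefers (lpref (lec p)) b s" using below bM by blast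
    then show ?thesis using prefers_trans[OF dl 1] by blast
  qed
qed

lemma NoBlock:
  assumes bp: "blocking_pair S spref lec lpref cp cl J s p" and des: "desires spref M s p"
  shows False
proof -
  interpret sw: spa2 S P L spref lec lpref cp cl M' M by (rule swap)
  define l where "l = lec p"
  define JP where "JP = assigned_p J p"
  define JL' where "JL' = assigned_l lec J l"
  have acc: "acceptable S spref lec lpref s p" using bp unfolding blocking_pair_def Let_def by blast
  have pP: "p \<in> P" using acc spref_P unfolding acceptable_def by blast
  have lL: "l \<in> L" using lec_in[OF pP] l_def by simp
  have dl: "distinct (lpref l)" using dist_l[OF lL] .
  have disj: "(card JP < cp p \<and> card JL' < cl l) \<or>
      (card JP < cp p \<and> card JL' = cl l \<and> s \<in> JL') \<or>
      (card JP < cp p \<and> card JL' = cl l \<and> prefers (lpref l) s (worst (lpref l) JL')) \<or>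
      (card JP = cp p \<and> prefers (lpref l) s (worst (lpref l) JP))"
    using bp unfolding blocking_pair_def Let_def JP_def JL'_def l_def by blast
  have cJL: "card JL' = card (assigned_l lec M l)" using JL[OF lL] JL'_def by simp
  have cJL': "card JL' = card (assigned_l lec M' l)" using cJL MLeq[OF lL] by simp
  have fJL: "finite JL'" using fin_Ml[OF Jmatch] JL'_def by simp
  have fJP: "finite JP" using fin_Mp[OF Jmatch] JP_def by simp
  have JLl: "JL' \<subseteq> set (lpref l)" using Ml_lp[OF Jmatch] JL'_def by simp
  have JPl: "JP \<subseteq> JL'" unfolding JP_def JL'_def l_def assigned_p_def assigned_l_def by blast
  have clp: "0 < cl l" using cl_pos[OF lL] .
  have cpp: "0 < cp p" using cp_pos[OF pP] .
  have goodL: "\<not> ((card JP < cp p \<and> card JL' = cl l \<and> s \<in> JL') \<or>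
      (card JP < cp p \<and> card JL' = cl l \<and> prefers (lpref l) s (worst (lpref l) JL')) \<or>
      (card JP = cp p \<and> prefers (lpref l) s (worst (lpref l) JP)))"
    if gl: "\<forall>w\<in>JL'. prefers (lpref l) w s"
  proof -
    have n2: "s \<notin> JL'" using gl prefers_irrefl[OF dl] by blast
    have n3: "\<not> (card JL' = cl l \<and> prefers (lpref l) s (worst (lpref l) JL'))"
    proof
      assume h: "card JL' = cl l \<and> prefers (lpref l) s (worst (lpref l) JL')"
      then have "JL' \<noteq> {}" using clp by auto
      then have "worst (lpref l) JL' \<in> JL'" using worst_prop[OF dl fJL _ JLl] by blast
      then show False using gl h prefers_asym[OF dl] by blast
    qed
    have n4: "\<not> (card JP = cp p \<and> prefers (lpref l) s (worst (lpref l) JP))"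
    proof
      assume h: "card JP = cp p \<and> prefers (lpref l) s (worst (lpref l) JP)"
      then have "JP \<noteq> {}" using cpp by auto
      then have "worst (lpref l) JP \<in> JP" using worst_prop[OF dl fJP _] JPl JLl by blast
      then show False using gl h prefers_asym[OF dl] JPl by blast
    qed
    show ?thesis using n2 n3 n4 by blast
  qed
  note nb = NB[OF stM acc des]
  show False
  proof (cases "card (assigned_p M p) = cp p \<and> (\<forall>t\<in>assigned_p M p. prefers (lpref (lec p)) t s)")
    case False
    then have ii: "card (assigned_l lec M l) = cl l" "\<forall>t\<in>assigned_l lec M l. prefers (lpref l) t s"
      using nb l_def by auto
    have "\<forall>w\<in>JL'. prefers (lpref l) w s" using H[OF lL ii(2)] JL'_def by simp
    then show False using goodL disj cJL ii(1) by auto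
  next
    case True
    then have full: "card (assigned_p M p) = cp p"
      and below: "\<forall>t\<in>assigned_p M p. prefers (lpref l) t s" using l_def by auto
    have gp: "\<forall>w\<in>JP. prefers (lpref l) w s" using Hp[OF pP full] below JP_def l_def by simp
    have n4: "\<not> (card JP = cp p \<and> prefers (lpref l) s (worst (lpref l) JP))"
    proof
      assume h: "card JP = cp p \<and> prefers (lpref l) s (worst (lpref l) JP)"
      then have "JP \<noteq> {}" using cpp by auto
      then have "worst (lpref l) JP \<in> JP" using worst_prop[OF dl fJP _] JPl JLl by blast
      then show False using gp h prefers_asym[OF dl] by blast
    qed
    then have under: "card JP < cp p" using disj by auto
    then have JM': "JP = assigned_p M' p" using ClaimP[OF pP] full JP_def by auto
    have "\<not> assigned_p M p \<subseteq> assigned_p M' p"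
    proof
      assume "assigned_p M p \<subseteq> assigned_p M' p"
      then have "card (assigned_p M p) \<le> card (assigned_p M' p)" using card_mono fin_Mp[OF mM'] by blast
      then show False using full under JM' by simp
    qed
    then obtain b where bM: "b \<in> assigned_p M p" and bn: "b \<notin> assigned_p M' p" by blast
    have "b \<notin> Ep p" "b \<notin> Xp p" using bn JM' decJ JP_def by auto
    then have bB: "b \<in> Bp p" using bM decM by auto
    have cM'p: "card (assigned_p M' p) < cp p" using under JM' by simp
    have iiB: "\<forall>t\<in>assigned_l lec M' l. prefers (lpref l) t b" using sw.FactA[OF bB] cM'p l_def by auto
    have "prefers (lpref l) b s" using below bM by blast
    then have belowM': "\<forall>t\<in>assigned_l lec M' l. prefers (lpref l) t s"
      using iiB prefers_trans[OF dl] by blast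
    have "\<forall>w\<in>JL'. prefers (lpref l) w s" using sw.H[OF lL belowM'] JsymL JL'_def by simp
    then have g: "\<not> ((card JP < cp p \<and> card JL' = cl l \<and> s \<in> JL') \<or>
      (card JP < cp p \<and> card JL' = cl l \<and> prefers (lpref l) s (worst (lpref l) JL')) \<or>
      (card JP = cp p \<and> prefers (lpref l) s (worst (lpref l) JP)))" using goodL by blast
    have "card (assigned_l lec M' l) = cl l" using sw.FactA[OF bB] cM'p l_def by auto
    then show False using g disj cJL' by auto
  qed
qed

lemma J_stable: "stable' J"
  unfolding stable_def
proof (intro conjI)
  show "matching' J" using Jmatch .
  show "\<not> (\<exists>s p. blocking_pair S spref lec lpref cp cl J s p)"
  proof
    assume "\<exists>s p. blocking_pair S spref lec lpref cp cl J s p"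
    then obtain s p where bp: "blocking_pair S spref lec lpref cp cl J s p" by blast
    interpret sw: spa2 S P L spref lec lpref cp cl M' M by (rule swap)
    have "desires spref J s p" using bp unfolding blocking_pair_def Let_def desires_def by blast
    then have "desires spref M s p \<or> desires spref M' s p" using J_desires by blast
    then show False
    proof
      assume "desires spref M s p" then show False using NoBlock bp by blast
    next
      assume d: "desires spref M' s p"
      have bp': "blocking_pair S spref lec lpref cp cl (join_worse spref M' M) s p" using bp JsymL by simp
      show False using sw.NoBlock[OF bp' d] .
    qed
  qed
qed

end

theorem lemma12:
  assumes "spa_instance S P L spref lec lpref cp cl"
    and "stable S P L spref lec lpref cp cl M"
    and "stable S P L spref lec lpref cp cl M'"
  shows "stable S P L spref lec lpref cp cl (join_worse spref M M')"
proof -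
  interpret spa2 S P L spref lec lpref cp cl M M'
    using assms unfolding spa2_def spa2_axioms_def spa_def by simp
  show ?thesis using J_stable .
qed

end
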